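(* Let $m\ge1$ divide $n$, let $\epsilon_m=e^{2\pi\sqrt{-1}/m}$ and $\Psi_m(X_0,\dots,X_{m-1})=\prod_{i\in(\mathbb Z/m\mathbb Z)^\times}\bigl(\sum_{j\in\mathbb Z/m\mathbb Z}\epsilon_m^{ij}X_j\bigr)$. Let $S_n$ act on $\mathbb C[X_0,\dots,X_{n-1}]$ by permuting the indices $\{0,\dots,n-1\}$ (i.e. $\sigma(X_j)=X_{\sigma(j)}$), and similarly $S_m$ on $\mathbb C[X_0,\dots,X_{m-1}]$. Let $Y_i=\sum_{j=0}^{n/m-1}X_{i+mj}$ for $0\le i\le m-1$. Then \[ \mathrm{Stab}\bigl(\Psi_m(Y_0,\dots,Y_{m-1})\bigr)=\mathrm{Stab}(\Psi_m)\wr S_{n/m}, \] where stabilizers are taken in $S_n$ and $S_m$ respectively.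
   Context: For a subgroup $G\le S_m$ (acting on $\{0,\dots,m-1\}$), $G\wr S_{n/m}$ denotes the subgroup of $S_n$ consisting of the permutations $(\sigma;\sigma_0,\dots,\sigma_{m-1})$ with $\sigma\in G$ and $\sigma_i\in S_{n/m}$ (acting on $\{0,\dots,n/m-1\}$), where $(\sigma;\sigma_0,\dots,\sigma_{m-1})$ maps $i+mj$ to $\sigma(i)+m\sigma_i(j)$ for $0\le i\le m-1$, $0\le j\le n/m-1$. $\mathrm{Stab}(F)$ denotes the set of permutations fixing the polynomial $F$. *)

theory Defs
  imports Complex_Main "HOL-Combinatorics.Permutations"
begin

text \<open>Polynomials over the complex numbers are represented by their polynomial functions
  (an infinite field, so polynomials and polynomial functions correspond bijectively).
  A point is a function x :: nat => complex; only the coordinates below the number of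
  variables matter.\<close>

definition eps :: "nat \<Rightarrow> complex" where
  "eps m = cis (2 * pi / real m)"

definition Psi :: "nat \<Rightarrow> (nat \<Rightarrow> complex) \<Rightarrow> complex" where
  "Psi m x = (\<Prod>i\<in>{i. i < m \<and> coprime i m}. \<Sum>j<m. eps m ^ (i * j) * x j)"

definition Yvars :: "nat \<Rightarrow> nat \<Rightarrow> (nat \<Rightarrow> complex) \<Rightarrow> nat \<Rightarrow> complex" where
  "Yvars m n x i = (\<Sum>j<n div m. x (i + m * j))"

text \<open>sigma acts by X_j |-> X_{sigma j}, i.e. (sigma F)(x) = F(x o sigma).
  Stab N F: permutations of {0..N-1} fixing F.\<close>
definition Stab :: "nat \<Rightarrow> ((nat \<Rightarrow> complex) \<Rightarrow> complex) \<Rightarrow> (nat \<Rightarrow> nat) set" where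
  "Stab N F = {\<sigma>. \<sigma> permutes {..<N} \<and> (\<forall>x. F (x \<circ> \<sigma>) = F x)}"

definition wreath :: "nat \<Rightarrow> nat \<Rightarrow> (nat \<Rightarrow> nat) set \<Rightarrow> (nat \<Rightarrow> nat) set" where
  "wreath m n G = {\<tau>. \<tau> permutes {..<n} \<and>
     (\<exists>\<sigma>\<in>G. \<exists>s. (\<forall>i<m. s i permutes {..<n div m}) \<and>
        (\<forall>i<m. \<forall>j<n div m. \<tau> (i + m * j) = \<sigma> i + m * s i j))}"

end

theory Submission imports Defs "HOL-Analysis.Complex_Transcendental"
begin
lemma eps_pow_eq:
  assumes "m \<ge> 1"
  shows "eps m ^ a = eps m ^ b \<longleftrightarrow> a mod m = b mod m"
proof -
  have e: "eps m ^ k = exp(2 * of_real pi * \<i> * of_nat k / of_nat m)" for k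
  proof -
    have "eps m ^ k = cis (real k * (2 * pi / real m))" unfolding eps_def by (rule Complex.DeMoivre)
    also have "... = exp (\<i> * complex_of_real (real k * (2 * pi / real m)))" by (rule cis_conv_exp)
    also have "... = exp(2 * of_real pi * \<i> * of_nat k / of_nat m)" by (simp add: field_simps)
    finally show ?thesis .
  qed
  show ?thesis unfolding e using complex_root_unity_eq[OF assms] by blast
qed

lemma mod_cancel_aux:
  fixes i p q m :: nat
  assumes "coprime i m" "(i*p) mod m = (i*q) mod m" "p \<le> q"
  shows "p mod m = q mod m"
proof -
  have "i*p \<le> i*q" using assms(3) by simp
  hence "m dvd i*q - i*p" using assms(2) mod_eq_dvd_iff_nat by metis
  hence "m dvd i*(q-p)" by (simp add: right_diff_distrib')
  hence "m dvd q - p" using assms(1) by (metis coprime_commute coprime_dvd_mult_right_iff)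
  thus ?thesis using assms(3) mod_eq_dvd_iff_nat by metis
qed

lemma mod_cancel:
  fixes i p q m :: nat
  assumes "coprime i m" "(i*p) mod m = (i*q) mod m"
  shows "p mod m = q mod m"
  using mod_cancel_aux[OF assms] mod_cancel_aux[OF assms(1) assms(2)[symmetric]] by linarith

lemma Psi_cong: "(\<And>i. i < m \<Longrightarrow> y i = z i) \<Longrightarrow> Psi m y = Psi m z"
  unfolding Psi_def by (intro prod.cong sum.cong) auto


lemma units_ne: "(m::nat) \<ge> 1 \<Longrightarrow> \<exists>i. i < m \<and> coprime i m"
proof (cases "m = 1")
  case True thus ?thesis by (intro exI[of _ 0]) simp
next
  case False thus "1 \<le> m \<Longrightarrow> ?thesis" by (intro exI[of _ 1]) simp
qed

lemma Psi_zero: "m \<ge> 1 \<Longrightarrow> Psi m (\<lambda>_. 0) = 0"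
  unfolding Psi_def using units_ne[of m] by (subst prod_zero_iff) auto

lemma Psi_delta2:
  assumes "m \<ge> 1" "p < m" "q < m"
    and "Psi m (\<lambda>i. (if i = p then 1 else 0) - (if i = q then 1 else 0)) = 0"
  shows "p = q"
proof -
  obtain i where i: "i < m" "coprime i m"
    "(\<Sum>j<m. eps m ^ (i*j) * ((if j = p then 1 else 0) - (if j = q then 1 else 0))) = 0"
    using assms(4) unfolding Psi_def by (subst (asm) prod_zero_iff) auto
  have "(\<Sum>j<m. eps m ^ (i*j) * ((if j = p then 1 else 0) - (if j = q then 1 else 0)))
      = eps m ^ (i*p) - eps m ^ (i*q)"
  proof -
    have "\<And>j. eps m ^ (i*j) * ((if j = p then 1 else 0) - (if j = q then 1 else 0))
       = (if j = p then eps m ^ (i*j) else 0) - (if j = q then eps m ^ (i*j) else 0)" by simp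
    hence "(\<Sum>j<m. eps m ^ (i*j) * ((if j = p then 1 else 0) - (if j = q then 1 else 0)))
      = (\<Sum>j<m. (if j = p then eps m ^ (i*j) else 0) - (if j = q then eps m ^ (i*j) else 0))"
      by (intro sum.cong) auto
    also have "... = eps m ^ (i*p) - eps m ^ (i*q)" using assms(2,3) by (simp add: sum_subtractf)
    finally show ?thesis .
  qed
  hence "eps m ^ (i*p) = eps m ^ (i*q)" using i(3) by simp
  hence "(i*p) mod m = (i*q) mod m" using eps_pow_eq[OF assms(1)] by blast
  hence "p mod m = q mod m" using mod_cancel i(2) by blast
  thus ?thesis using assms(2,3) by simp
qed

lemma Y_delta:
  assumes "m \<ge> 1" "m dvd n" "c < n" "i < m"
  shows "Yvars m n (\<lambda>k. if k = c then 1 else 0) i = (if i = c mod m then 1 else 0)"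
proof -
  have eq: "(i + m*j = c) \<longleftrightarrow> (j = c div m \<and> i = c mod m)" for j
  proof
    assume "i + m*j = c" thus "j = c div m \<and> i = c mod m" using assms(1,4) by auto
  next
    assume "j = c div m \<and> i = c mod m" thus "i + m*j = c" by simp
  qed
  have lt: "c div m < n div m" using assms
    by (metis dvd_div_mult_self div_less_iff_less_mult mult.commute not_one_le_zero neq0_conv)
  have "Yvars m n (\<lambda>k. if k = c then 1 else 0) i
     = (\<Sum>j<n div m. if j = c div m then (if i = c mod m then 1 else 0) else 0)"
    unfolding Yvars_def by (intro sum.cong) (auto simp: eq)
  also have "... = (if i = c mod m then 1 else 0)" using lt by simp
  finally show ?thesis .
qed

lemma Y_diff: "Yvars m n (\<lambda>k. f k - g k) i = Yvars m n f i - Yvars m n g i"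
  unfolding Yvars_def by (simp add: sum_subtractf)

lemma block:
  assumes "m \<ge> 1" "m dvd n" "\<tau> \<in> Stab n (\<lambda>x. Psi m (Yvars m n x))"
    and "a < n" "b < n" "a mod m = b mod m"
  shows "\<tau> a mod m = \<tau> b mod m"
proof -
  have perm: "\<tau> permutes {..<n}" and st: "\<And>x. Psi m (Yvars m n (x \<circ> \<tau>)) = Psi m (Yvars m n x)"
    using assms(3) unfolding Stab_def by auto
  have inj: "inj \<tau>" using perm permutes_inj by blast
  have ta: "\<tau> a < n" "\<tau> b < n" using perm assms(4,5) permutes_in_image by fastforce+
  define x :: "nat \<Rightarrow> complex" where "x = (\<lambda>k. (if k = \<tau> a then 1 else 0) - (if k = \<tau> b then 1 else 0))"
  have xt: "x \<circ> \<tau> = (\<lambda>k. (if k = a then 1 else 0) - (if k = b then 1 else 0))"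
    unfolding x_def using inj by (auto simp: inj_eq)
  have "Psi m (Yvars m n (x \<circ> \<tau>)) = Psi m (\<lambda>_. 0)"
    unfolding xt Y_diff by (rule Psi_cong) (simp add: Y_delta assms)
  hence "Psi m (Yvars m n x) = 0" using st Psi_zero[OF assms(1)] by simp
  moreover have "Psi m (Yvars m n x) = Psi m (\<lambda>i. (if i = \<tau> a mod m then 1 else 0) - (if i = \<tau> b mod m then 1 else 0))"
    unfolding x_def Y_diff by (rule Psi_cong) (simp add: Y_delta assms ta)
  ultimately show ?thesis using Psi_delta2[OF assms(1)] assms(1) by simp
qed


lemma Y_wreath:
  assumes "\<forall>i<m. s i permutes {..<n div m}"
    and "\<forall>i<m. \<forall>j<n div m. \<tau> (i + m*j) = \<sigma> i + m * s i j" and "i < m"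
  shows "Yvars m n (x \<circ> \<tau>) i = Yvars m n x (\<sigma> i)"
proof -
  have p: "s i permutes {..<n div m}" using assms by auto
  have "Yvars m n (x \<circ> \<tau>) i = (\<Sum>j<n div m. x (\<sigma> i + m * s i j))"
    unfolding Yvars_def using assms by (intro sum.cong) auto
  also have "... = (\<Sum>j<n div m. ((\<lambda>j. x (\<sigma> i + m * j)) \<circ> s i) j)" by simp
  also have "... = (\<Sum>j<n div m. x (\<sigma> i + m * j))" using sum.permute[OF p] by metis
  finally show ?thesis unfolding Yvars_def .
qed

lemma stab_inv:
  assumes "\<tau> \<in> Stab n F" shows "inv \<tau> \<in> Stab n F"
proof -
  have perm: "\<tau> permutes {..<n}" and st: "\<And>x. F (x \<circ> \<tau>) = F x"
    using assms unfolding Stab_def by auto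
  have "F (x \<circ> inv \<tau>) = F x" for x
  proof -
    have "x \<circ> inv \<tau> \<circ> \<tau> = x" using permutes_inv_o(2)[OF perm] by (metis comp_assoc comp_id)
    thus ?thesis using st[of "x \<circ> inv \<tau>"] by simp
  qed
  thus ?thesis using permutes_inv[OF perm] unfolding Stab_def by auto
qed

theorem lemma2p2:
  fixes m n :: nat
  assumes "m \<ge> 1" and "m dvd n"
  shows "Stab n (\<lambda>x. Psi m (Yvars m n x)) = wreath m n (Stab m (Psi m))"
proof (rule set_eqI iffI)+
  fix \<tau> assume "\<tau> \<in> wreath m n (Stab m (Psi m))"
  then obtain \<sigma> s where perm: "\<tau> permutes {..<n}" and sig: "\<sigma> \<in> Stab m (Psi m)"
    and sp: "\<forall>i<m. s i permutes {..<n div m}"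
    and form: "\<forall>i<m. \<forall>j<n div m. \<tau> (i + m*j) = \<sigma> i + m * s i j"
    unfolding wreath_def by blast
  have "Psi m (Yvars m n (x \<circ> \<tau>)) = Psi m (Yvars m n x)" for x
  proof -
    have "Psi m (Yvars m n (x \<circ> \<tau>)) = Psi m (Yvars m n x \<circ> \<sigma>)"
    proof (rule Psi_cong)
      fix i assume "i < m"
      thus "Yvars m n (x \<circ> \<tau>) i = (Yvars m n x \<circ> \<sigma>) i"
        using Y_wreath[OF sp form, of i x] by simp
    qed
    also have "... = Psi m (Yvars m n x)" using sig unfolding Stab_def by auto
    finally show ?thesis .
  qed
  thus "\<tau> \<in> Stab n (\<lambda>x. Psi m (Yvars m n x))" using perm unfolding Stab_def by auto
next
  fix \<tau> assume tS: "\<tau> \<in> Stab n (\<lambda>x. Psi m (Yvars m n x))"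
  have perm: "\<tau> permutes {..<n}" and st: "\<And>x. Psi m (Yvars m n (x \<circ> \<tau>)) = Psi m (Yvars m n x)"
    using tS unfolding Stab_def by auto
  have idS: "id \<in> Stab m (Psi m)" unfolding Stab_def by (auto simp: permutes_id)
  show "\<tau> \<in> wreath m n (Stab m (Psi m))"
  proof (cases "n = 0")
    case True
    hence "\<tau> = id" using perm by (simp add: permutes_empty)
    thus ?thesis using True idS unfolding wreath_def
      by (auto intro!: exI[of _ "\<lambda>_. id"] simp: permutes_id)
  next
    case False
    define N where "N = n div m"
    have nN: "n = m * N" using assms(2) unfolding N_def by simp
    have N1: "N \<ge> 1" using False nN by (cases N) auto
    have lt: "i + m * j < n" if "i < m" "j < N" for i j
    proof -
      have "i + m * j < m + m * j" using that by simp
      also have "... = m * (j + 1)" by simp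
      also have "... \<le> m * N" using that by (intro mult_le_mono2) simp
      finally show ?thesis using nN by simp
    qed
    have tlt: "\<tau> k < n" if "k < n" for k using perm that permutes_in_image by fastforce
    have blk: "\<tau> a mod m = \<tau> b mod m" if "a < n" "b < n" "a mod m = b mod m" for a b
      using block[OF assms tS that] .
    have blki: "inv \<tau> a mod m = inv \<tau> b mod m" if "a < n" "b < n" "a mod m = b mod m" for a b
      using block[OF assms stab_inv[OF tS] that] .
    define \<sigma> where "\<sigma> = (\<lambda>i. if i < m then \<tau> i mod m else i)"
    define s where "s = (\<lambda>i j. if j < N then \<tau> (i + m * j) div m else j)"
    have m0: "m > 0" using assms by simp
    have sigp: "\<sigma> permutes {..<m}"
    proof (rule bij_imp_permutes)
      have inj: "inj_on \<sigma> {..<m}"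
      proof (rule inj_onI)
        fix i i' assume ii: "i \<in> {..<m}" "i' \<in> {..<m}" "\<sigma> i = \<sigma> i'"
        have "i < n" "i' < n" using ii lt[of _ 0] N1 by auto
        hence "inv \<tau> (\<tau> i) mod m = inv \<tau> (\<tau> i') mod m"
          using ii tlt by (intro blki) (auto simp: \<sigma>_def)
        thus "i = i'" using ii permutes_inverses(2)[OF perm] by simp
      qed
      have "\<sigma> ` {..<m} \<subseteq> {..<m}" using m0 by (auto simp: \<sigma>_def)
      thus "bij_betw \<sigma> {..<m} {..<m}" using inj endo_inj_surj[of "{..<m}" \<sigma>]
        by (simp add: bij_betw_def)
    qed (simp add: \<sigma>_def)
    have sp: "\<forall>i<m. s i permutes {..<n div m}"
    proof (intro allI impI)
      fix i assume i: "i < m"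
      show "s i permutes {..<n div m}" unfolding N_def[symmetric]
      proof (rule bij_imp_permutes)
        have inj: "inj_on (s i) {..<N}"
        proof (rule inj_onI)
          fix j j' assume jj: "j \<in> {..<N}" "j' \<in> {..<N}" "s i j = s i j'"
          have d: "\<tau> (i + m*j) div m = \<tau> (i + m*j') div m" using jj by (simp add: s_def)
          have "\<tau> (i + m*j) mod m = \<tau> (i + m*j') mod m" using jj i lt by (intro blk) auto
          hence "\<tau> (i + m*j) = \<tau> (i + m*j')" using d by (metis div_mod_decomp)
          hence "i + m*j = i + m*j'" using permutes_inj[OF perm] by (simp add: inj_eq)
          thus "j = j'" using m0 by simp
        qed
        have "s i ` {..<N} \<subseteq> {..<N}"
        proof
          fix y assume "y \<in> s i ` {..<N}"
          then obtain j where j: "j < N" "y = \<tau> (i + m*j) div m" by (auto simp: s_def)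
          have "\<tau> (i + m*j) < m * N" using tlt lt i j nN by simp
          thus "y \<in> {..<N}" using j m0 by (simp add: div_less_iff_less_mult mult.commute)
        qed
        thus "bij_betw (s i) {..<N} {..<N}" using inj endo_inj_surj[of "{..<N}" "s i"]
          by (simp add: bij_betw_def)
      qed (simp add: s_def)
    qed
    have form: "\<forall>i<m. \<forall>j<n div m. \<tau> (i + m*j) = \<sigma> i + m * s i j"
    proof (intro allI impI)
      fix i j assume i: "i < m" and j: "j < n div m"
      have "\<tau> (i + m*j) mod m = \<tau> i mod m"
        using i j lt[of i j] lt[of i 0] N1 unfolding N_def by (intro blk) auto
      moreover have "\<sigma> i = \<tau> i mod m" "s i j = \<tau> (i + m*j) div m"
        using i j unfolding \<sigma>_def s_def N_def by auto
      ultimately show "\<tau> (i + m*j) = \<sigma> i + m * s i j"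
        using mod_mult_div_eq[of "\<tau> (i + m*j)" m] by simp
    qed
    have sigS: "\<sigma> \<in> Stab m (Psi m)"
    proof -
      have "Psi m (y \<circ> \<sigma>) = Psi m y" for y
      proof -
        define x where "x = (\<lambda>k. if k < m then y k else 0)"
        have Yx: "Yvars m n x i = y i" if "i < m" for i
        proof -
          have "Yvars m n x i = (\<Sum>j<N. if j = 0 then y i else 0)"
            unfolding Yvars_def N_def[symmetric] x_def using that
            by (intro sum.cong) (auto simp: gr0_conv_Suc)
          thus ?thesis using N1 by simp
        qed
        have "Psi m (y \<circ> \<sigma>) = Psi m (Yvars m n (x \<circ> \<tau>))"
        proof (rule Psi_cong)
          fix i assume i: "i < m"
          have "\<sigma> i < m" using i m0 by (simp add: \<sigma>_def)
          thus "(y \<circ> \<sigma>) i = Yvars m n (x \<circ> \<tau>) i"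
            using Y_wreath[OF sp form i] Yx by simp
        qed
        also have "... = Psi m (Yvars m n x)" by (rule st)
        also have "... = Psi m y" by (rule Psi_cong) (simp add: Yx)
        finally show ?thesis .
      qed
      thus ?thesis using sigp unfolding Stab_def by auto
    qed
    show ?thesis unfolding wreath_def using perm sigS sp form by blast
  qed
qed

end
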